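(* Every nonempty closed subspace of an $S^{\ast}$-well-filtered space is $S^{\ast}$-well-filtered.
   Context: All spaces are $T_0$. The specialization order of $X$ is given by $x\le y$ iff $x\in cl(\{y\})$; ${\uparrow}$ is taken with respect to it; a subset is saturated if it is an upper set in the specialization order. $K(X)$ denotes the set of all nonempty compact saturated subsets of $X$; a family in $K(X)$ is filtered if any two members contain a common member. $X$ is $S^{\ast}$-well-filtered if for every filtered family $\{K_i\mid i\in I\}\subseteq K(X)$, every $G\in K(X)$ and every nonempty open $U$, $\bigcap_{i\in I}K_i\cap G\subseteq U$ implies $K_i\cap G\subseteq U$ for some $i$. *)

theory Defs
  imports "HOL-Analysis.Analysis"
begin

definition spec_le :: "'a topology \<Rightarrow> 'a \<Rightarrow> 'a \<Rightarrow> bool" where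
  "spec_le X x y \<longleftrightarrow> x \<in> topspace X \<and> y \<in> topspace X \<and> x \<in> X closure_of {y}"

definition saturated_in :: "'a topology \<Rightarrow> 'a set \<Rightarrow> bool" where
  "saturated_in X S \<longleftrightarrow> S \<subseteq> topspace X \<and> (\<forall>x\<in>S. \<forall>y. spec_le X x y \<longrightarrow> y \<in> S)"

definition KX :: "'a topology \<Rightarrow> 'a set set" where
  "KX X = {K. K \<noteq> {} \<and> compactin X K \<and> saturated_in X K}"

definition filtered_K :: "'a topology \<Rightarrow> 'a set set \<Rightarrow> bool" where
  "filtered_K X \<K> \<longleftrightarrow> \<K> \<subseteq> KX X \<and> \<K> \<noteq> {} \<and>
     (\<forall>K1\<in>\<K>. \<forall>K2\<in>\<K>. \<exists>K3\<in>\<K>. K3 \<subseteq> K1 \<inter> K2)"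

definition sstar_well_filtered :: "'a topology \<Rightarrow> bool" where
  "sstar_well_filtered X \<longleftrightarrow>
     (\<forall>\<K> G U. filtered_K X \<K> \<and> G \<in> KX X \<and> openin X U \<and> U \<noteq> {} \<and>
        \<Inter>\<K> \<inter> G \<subseteq> U \<longrightarrow> (\<exists>K\<in>\<K>. K \<inter> G \<subseteq> U))"

end

theory Submission
  imports Defs
begin

definition upc :: "'a topology \<Rightarrow> 'a set \<Rightarrow> 'a set" where
  "upc X K = {y. \<exists>x\<in>K. spec_le X x y}"

lemma spec_le_open:
  assumes "openin X W" "x \<in> W" "spec_le X x y" shows "y \<in> W"
proof -
  have "x \<in> X closure_of {y}" using assms(3) spec_le_def by metis
  then have "\<exists>y'. y' \<in> {y} \<and> y' \<in> W" using assms(1,2) in_closure_of by metis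
  then show ?thesis by simp
qed

lemma spec_le_trans:
  assumes "spec_le X x y" "spec_le X y z" shows "spec_le X x z"
proof -
  have "x \<in> X closure_of {y}" "y \<in> X closure_of {z}" using assms spec_le_def by metis+
  then have "X closure_of {y} \<subseteq> X closure_of {z}"
    by (intro closure_of_minimal) auto
  then show ?thesis using assms unfolding spec_le_def by blast
qed

lemma spec_le_refl: "x \<in> topspace X \<Longrightarrow> spec_le X x x"
  unfolding spec_le_def using closure_of_subset[of "{x}" X] by simp

lemma upc_sub: "K \<subseteq> topspace X \<Longrightarrow> K \<subseteq> upc X K"
proof
  fix x assume "K \<subseteq> topspace X" "x \<in> K"
  then have "spec_le X x x" using spec_le_refl by (metis subsetD)
  then show "x \<in> upc X K" unfolding upc_def using \<open>x \<in> K\<close> by auto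
qed

lemma upc_mono: "K \<subseteq> L \<Longrightarrow> upc X K \<subseteq> upc X L"
  unfolding upc_def by auto

lemma upc_KX:
  assumes "K \<noteq> {}" "compactin X K"
  shows "upc X K \<in> KX X"
proof -
  have top: "K \<subseteq> topspace X" using assms compactin_subset_topspace by blast
  have ne: "upc X K \<noteq> {}" using upc_sub[OF top] assms by blast
  have ts: "upc X K \<subseteq> topspace X" unfolding upc_def spec_le_def by blast
  have sat: "saturated_in X (upc X K)"
    unfolding saturated_in_def
  proof (intro conjI ballI allI impI)
    show "upc X K \<subseteq> topspace X" by (rule ts)
    fix x y assume "x \<in> upc X K" "spec_le X x y"
    then obtain w where "w \<in> K" "spec_le X w x" unfolding upc_def by blast
    then have "spec_le X w y" using spec_le_trans \<open>spec_le X x y\<close> by metis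
    then show "y \<in> upc X K" unfolding upc_def using \<open>w \<in> K\<close> by blast
  qed
  have cp: "compactin X (upc X K)"
    unfolding compactin_def
  proof (intro conjI allI impI)
    show "upc X K \<subseteq> topspace X" by (rule ts)
    fix \<U> assume h: "(\<forall>U\<in>\<U>. openin X U) \<and> upc X K \<subseteq> \<Union>\<U>"
    then have "K \<subseteq> \<Union>\<U>" using upc_sub[OF top] by blast
    with h assms(2) obtain \<F> where F: "finite \<F>" "\<F> \<subseteq> \<U>" "K \<subseteq> \<Union>\<F>"
      unfolding compactin_def by meson
    have "upc X K \<subseteq> \<Union>\<F>"
    proof
      fix y assume "y \<in> upc X K"
      then obtain x where x: "x \<in> K" "spec_le X x y" unfolding upc_def by blast
      then obtain W where "W \<in> \<F>" "x \<in> W" using F by blast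
      moreover have "openin X W" using h F \<open>W \<in> \<F>\<close> by blast
      ultimately have "y \<in> W" using spec_le_open x(2) by metis
      then show "y \<in> \<Union>\<F>" using \<open>W \<in> \<F>\<close> by blast
    qed
    then show "\<exists>\<F>. finite \<F> \<and> \<F> \<subseteq> \<U> \<and> upc X K \<subseteq> \<Union>\<F>" using F by blast
  qed
  show ?thesis unfolding KX_def using ne sat cp by simp
qed

lemma spec_le_sub:
  assumes "closedin X A" "x \<in> A" "y \<in> A" "spec_le X x y"
  shows "spec_le (subtopology X A) x y"
proof -
  have "x \<in> X closure_of {y}" "x \<in> topspace X" "y \<in> topspace X" using assms(4) spec_le_def by metis+
  moreover have "A \<inter> {y} = {y}" using assms(3) by blast
  ultimately have "x \<in> (subtopology X A) closure_of {y}"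
    using assms(2) closure_of_subtopology[of X A "{y}"] by simp
  then show ?thesis unfolding spec_le_def using assms(2,3) \<open>x \<in> topspace X\<close> \<open>y \<in> topspace X\<close>
    by simp
qed

lemma upc_inter:
  assumes "closedin X A" "K \<in> KX (subtopology X A)"
  shows "upc X K \<inter> A = K"
proof -
  have c: "compactin X K \<and> K \<subseteq> A" using assms(2) unfolding KX_def compactin_subtopology by simp
  then have KA: "K \<subseteq> A" "K \<subseteq> topspace X"
    using compactin_subset_topspace by auto
  have sat: "saturated_in (subtopology X A) K" using assms(2) unfolding KX_def by simp
  show ?thesis
  proof
    show "upc X K \<inter> A \<subseteq> K"
    proof
      fix y assume "y \<in> upc X K \<inter> A"
      then obtain x where "x \<in> K" "spec_le X x y" "y \<in> A" unfolding upc_def by blast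
      then have "spec_le (subtopology X A) x y" using spec_le_sub[OF assms(1)] KA(1) by (meson subsetD)
      then show "y \<in> K" using sat \<open>x \<in> K\<close> unfolding saturated_in_def by blast
    qed
    show "K \<subseteq> upc X K \<inter> A" using upc_sub[OF KA(2)] KA by blast
  qed
qed

lemma KX_sub_X:
  assumes "K \<in> KX (subtopology X A)"
  shows "K \<noteq> {}" "compactin X K"
  using assms unfolding KX_def compactin_subtopology by simp_all

lemma KX_sub_A:
  assumes "K \<in> KX (subtopology X A)"
  shows "K \<subseteq> A"
  using assms unfolding KX_def compactin_subtopology by simp

lemma upcK:
  assumes "K \<in> KX (subtopology X A)"
  shows "upc X K \<in> KX X"
  using upc_KX[OF KX_sub_X(1)[OF assms] KX_sub_X(2)[OF assms]] .

theorem mainTheorem14: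
  fixes X :: "'a topology" and A :: "'a set"
  assumes "t0_space X"
    and "sstar_well_filtered X"
    and "closedin X A"
    and "A \<noteq> {}"
  shows "sstar_well_filtered (subtopology X A)"
  unfolding sstar_well_filtered_def
proof (intro allI impI)
  fix \<K> G U
  assume h: "filtered_K (subtopology X A) \<K> \<and> G \<in> KX (subtopology X A) \<and>
    openin (subtopology X A) U \<and> U \<noteq> {} \<and> \<Inter>\<K> \<inter> G \<subseteq> U"
  then have fK: "filtered_K (subtopology X A) \<K>" and G: "G \<in> KX (subtopology X A)"
    and U: "openin (subtopology X A) U" "U \<noteq> {}" and I: "\<Inter>\<K> \<inter> G \<subseteq> U" by simp_all
  obtain V where V: "openin X V" "U = V \<inter> A" using U(1) openin_subtopology by metis
  define V' where "V' = V \<union> (topspace X - A)"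
  have V'o: "openin X V'" unfolding V'_def using V(1) assms(3)
    by (simp add: openin_Un openin_diff)
  have V'ne: "V' \<noteq> {}" using U(2) V(2) unfolding V'_def by auto
  define \<K>' where "\<K>' = upc X ` \<K>"
  have KK: "\<And>K. K \<in> \<K> \<Longrightarrow> K \<in> KX (subtopology X A)" using fK unfolding filtered_K_def by auto
  have fK3: "\<And>K1 K2. K1 \<in> \<K> \<Longrightarrow> K2 \<in> \<K> \<Longrightarrow> \<exists>K3\<in>\<K>. K3 \<subseteq> K1 \<inter> K2"
    using fK unfolding filtered_K_def by auto
  have fKne: "\<K> \<noteq> {}" using fK unfolding filtered_K_def by auto
  have fK': "filtered_K X \<K>'"
    unfolding filtered_K_def \<K>'_def
  proof (intro conjI)
    show "upc X ` \<K> \<subseteq> KX X"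
    proof
      fix x assume "x \<in> upc X ` \<K>"
      then obtain K where "K \<in> \<K>" "x = upc X K" by auto
      then show "x \<in> KX X" using upcK[OF KK[OF \<open>K \<in> \<K>\<close>]] by simp
    qed
    show "upc X ` \<K> \<noteq> {}" using fKne by simp
    show "\<forall>K1\<in>upc X ` \<K>. \<forall>K2\<in>upc X ` \<K>. \<exists>K3\<in>upc X ` \<K>. K3 \<subseteq> K1 \<inter> K2"
    proof (intro ballI)
      fix K1 K2 assume "K1 \<in> upc X ` \<K>" "K2 \<in> upc X ` \<K>"
      then obtain L1 L2 where L: "L1 \<in> \<K>" "L2 \<in> \<K>" "K1 = upc X L1" "K2 = upc X L2" by auto
      then obtain L3 where L3: "L3 \<in> \<K>" "L3 \<subseteq> L1 \<inter> L2" using fK3 by metis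
      have "upc X L3 \<subseteq> K1" using L(3) L3(2) upc_mono[of L3 L1 X] by simp
      moreover have "upc X L3 \<subseteq> K2" using L(4) L3(2) upc_mono[of L3 L2 X] by simp
      moreover have "upc X L3 \<in> upc X ` \<K>" using L3(1) by simp
      ultimately show "\<exists>K3\<in>upc X ` \<K>. K3 \<subseteq> K1 \<inter> K2" by auto
    qed
  qed
  have G': "upc X G \<in> KX X" using upcK[OF G] .
  have Gt: "upc X G \<subseteq> topspace X" using G' unfolding KX_def saturated_in_def by simp
  have sub: "\<Inter>\<K>' \<inter> upc X G \<subseteq> V'"
  proof
    fix z assume z: "z \<in> \<Inter>\<K>' \<inter> upc X G"
    have zt: "z \<in> topspace X" using z Gt by auto
    show "z \<in> V'"
    proof (cases "z \<in> A")
      case True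
      have "z \<in> \<Inter>\<K>"
      proof
        fix K assume "K \<in> \<K>"
        then have "z \<in> upc X K" using z unfolding \<K>'_def by auto
        then show "z \<in> K" using upc_inter[OF assms(3) KK[OF \<open>K \<in> \<K>\<close>]] True by auto
      qed
      moreover have "z \<in> G" using upc_inter[OF assms(3) G] z True by auto
      ultimately have "z \<in> U" using I by auto
      then show ?thesis using V(2) unfolding V'_def by auto
    next
      case False then show ?thesis using zt unfolding V'_def by auto
    qed
  qed
  have "\<exists>K\<in>\<K>'. K \<inter> upc X G \<subseteq> V'"
    using assms(2) fK' G' V'o V'ne sub unfolding sstar_well_filtered_def by auto
  then obtain K' where K': "K' \<in> \<K>'" "K' \<inter> upc X G \<subseteq> V'" by auto
  then obtain K where K: "K \<in> \<K>" "K' = upc X K" unfolding \<K>'_def by auto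
  have "K \<inter> G \<subseteq> U"
  proof
    fix z assume z: "z \<in> K \<inter> G"
    have zA: "z \<in> A" using z KX_sub_A[OF G] by auto
    have "z \<in> upc X K" using z upc_inter[OF assms(3) KK[OF K(1)]] by auto
    moreover have "z \<in> upc X G" using z upc_inter[OF assms(3) G] by auto
    ultimately have "z \<in> V'" using K' K(2) by auto
    then show "z \<in> U" using zA V(2) unfolding V'_def by auto
  qed
  then show "\<exists>K\<in>\<K>. K \<inter> G \<subseteq> U" using K(1) by auto
qed

end
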